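(* Assume $\eta_{(i)}=\tau_{(i)}-1_K$ for all $i\in\Omega$, and let $Y\subseteq\Omega$. Then: (1) for any $D\subseteq\max(Y)$, $\displaystyle\pi(Y,D)=\sum_{A\subseteq D}(-1)^{|A|}\Big(\prod_{i\in\langle A\rangle_Y}\tau_{(i)}x\Big)\pi(Y-\langle A\rangle_Y,\emptyset)$; (2) for any $D\subseteq\max(Y)$, $\displaystyle\Big(\prod_{i\in\langle D\rangle_Y}\tau_{(i)}x\Big)\pi(Y-\langle D\rangle_Y,\emptyset)=\sum_{A\subseteq D}(-1)^{|A|}\pi(Y,A)$.
   Context: $\Omega$ is a finite set and $\mathbf{P}=(\Omega,\preccurlyeq_{\mathbf{P}})$ a poset. For $Y\subseteq\Omega$: $\max(Y)$ is the set of maximal elements of $Y$ w.r.t. $\preccurlyeq_{\mathbf{P}}$; $\mathcal{I}(Y)$ is the set of down-closed subsets of $Y$ (with the induced order); for $A\subseteq Y$, $\langle A\rangle_Y=\{y\in Y:\exists a\in A, y\preccurlyeq_{\mathbf{P}}a\}$. $K$ is a commutative ring, $\tau,\eta\in K^{\Omega}$. For $D,I\subseteq\Omega$, $\varphi(D,I)=(-1)^{|I\cap D|}\big(\prod_{i\in I-\max(I)}\tau_{(i)}\big)\big(\prod_{i\in\max(I)-D}\eta_{(i)}\big)$ if $I\cap D\subseteq\max(I)$, and $0$ otherwise. For $D\subseteq Y\subseteq\Omega$, $\pi(Y,D)=\sum_{I\in\mathcal{I}(Y)}\varphi(D,I)x^{|I|}\in K[x]$. The expression $\prod_{i\in S}\tau_{(i)}x$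 means $\prod_{i\in S}(\tau_{(i)}x)$. *)

theory Defs
  imports "HOL-Computational_Algebra.Polynomial"
begin

definition poset_on :: "'a set \<Rightarrow> ('a \<Rightarrow> 'a \<Rightarrow> bool) \<Rightarrow> bool" where
  "poset_on Om le \<longleftrightarrow> finite Om \<and>
     (\<forall>x\<in>Om. le x x) \<and>
     (\<forall>x\<in>Om. \<forall>y\<in>Om. le x y \<and> le y x \<longrightarrow> x = y) \<and>
     (\<forall>x\<in>Om. \<forall>y\<in>Om. \<forall>z\<in>Om. le x y \<and> le y z \<longrightarrow> le x z)"

definition maxel :: "('a \<Rightarrow> 'a \<Rightarrow> bool) \<Rightarrow> 'a set \<Rightarrow> 'a set" where
  "maxel le Y = {y\<in>Y. \<forall>z\<in>Y. le y z \<longrightarrow> z = y}"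

definition downsets :: "('a \<Rightarrow> 'a \<Rightarrow> bool) \<Rightarrow> 'a set \<Rightarrow> 'a set set" where
  "downsets le Y = {I. I \<subseteq> Y \<and> (\<forall>i\<in>I. \<forall>y\<in>Y. le y i \<longrightarrow> y \<in> I)}"

definition gen :: "('a \<Rightarrow> 'a \<Rightarrow> bool) \<Rightarrow> 'a set \<Rightarrow> 'a set \<Rightarrow> 'a set" where
  "gen le Y A = {y\<in>Y. \<exists>a\<in>A. le y a}"

definition phi :: "('a \<Rightarrow> 'a \<Rightarrow> bool) \<Rightarrow> ('a \<Rightarrow> 'b::comm_ring_1) \<Rightarrow> ('a \<Rightarrow> 'b)
    \<Rightarrow> 'a set \<Rightarrow> 'a set \<Rightarrow> 'b" where
  "phi le tau eta D I =
     (if I \<inter> D \<subseteq> maxel le I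
      then (-1) ^ card (I \<inter> D) * (\<Prod>i\<in>I - maxel le I. tau i) * (\<Prod>i\<in>maxel le I - D. eta i)
      else 0)"

definition pi_poly :: "('a \<Rightarrow> 'a \<Rightarrow> bool) \<Rightarrow> ('a \<Rightarrow> 'b::comm_ring_1) \<Rightarrow> ('a \<Rightarrow> 'b)
    \<Rightarrow> 'a set \<Rightarrow> 'a set \<Rightarrow> 'b poly" where
  "pi_poly le tau eta Y D = (\<Sum>I\<in>downsets le Y. monom (phi le tau eta D I) (card I))"

end

theory Submission
  imports Defs
begin


lemma prod_pmonom:
  fixes t :: "'a \<Rightarrow> 'b::comm_ring_1"
  assumes "finite G"
  shows "(\<Prod>i\<in>G. [:0, t i:]) = monom (\<Prod>i\<in>G. t i) (card G)"
  using assms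
proof (induction G rule: finite_induct)
  case empty then show ?case by simp
next
  case (insert x F)
  have "[:0, t x:] = monom (t x) 1" by (simp add: monom_Suc monom_0)
  with insert show ?case by (simp add: mult_monom)
qed

lemma neg_pow_monom:
  "((-1)::'b::comm_ring_1 poly) ^ n * monom c k = monom ((-1) ^ n * c) k"
proof -
  have "((-1)::'b poly) = monom (-1) 0" by (simp add: monom_0 one_pCons)
  then have "((-1)::'b poly) ^ n = monom ((-1)^n) 0" by (simp add: monom_power)
  then show ?thesis by (simp add: mult_monom)
qed

lemma alt_sum_pow:
  assumes "finite E"
  shows "(\<Sum>C\<in>Pow E. ((-1)::'c::comm_ring_1) ^ card C) = (if E = {} then 1 else 0)"
proof -
  have "(\<Prod>x\<in>E. (-1::'c) + 1) = (\<Sum>X\<in>Pow E. (\<Prod>x\<in>X. -1) * (\<Prod>x\<in>E-X. 1))"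
    by (rule prod_add[OF assms])
  then have "(\<Sum>C\<in>Pow E. ((-1)::'c) ^ card C) = (\<Prod>x\<in>E. (0::'c))" by simp
  also have "\<dots> = (if E = {} then 1 else 0)" using assms by (simp add: power_0_left)
  finally show ?thesis .
qed

lemma alt_sum_super:
  assumes "finite D" "B \<subseteq> D"
  shows "(\<Sum>A\<in>Pow D. if B \<subseteq> A then ((-1)::'c::comm_ring_1) ^ card A else 0)
         = (if B = D then (-1) ^ card D else 0)"
proof -
  have fB: "finite B" using assms finite_subset by blast
  have "(\<Sum>A\<in>Pow D. if B \<subseteq> A then ((-1)::'c) ^ card A else 0)
        = (\<Sum>A\<in>{A\<in>Pow D. B \<subseteq> A}. ((-1)::'c) ^ card A)"
    using assms by (subst sum.inter_filter) auto
  also have "\<dots> = (\<Sum>C\<in>Pow (D - B). ((-1)::'c) ^ card (B \<union> C))"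
    by (rule sum.reindex_bij_witness[where j = "\<lambda>A. A - B" and i = "\<lambda>C. B \<union> C"])
       (use assms in \<open>auto simp: sup_absorb2\<close>)
  also have "\<dots> = (\<Sum>C\<in>Pow (D - B). (-1) ^ card B * ((-1)::'c) ^ card C)"
  proof (rule sum.cong)
    fix C assume "C \<in> Pow (D - B)"
    then have "card (B \<union> C) = card B + card C"
      using fB assms by (intro card_Un_disjoint) (auto intro: finite_subset)
    then show "((-1)::'c) ^ card (B \<union> C) = (-1) ^ card B * (-1) ^ card C"
      by (simp add: power_add)
  qed simp
  also have "\<dots> = (-1) ^ card B * (if D - B = {} then 1 else 0)"
    using assms by (simp add: sum_distrib_left[symmetric] alt_sum_pow)
  also have "\<dots> = (if B = D then (-1) ^ card D else 0)" using assms by auto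
  finally show ?thesis .
qed

lemma subset_inversion:
  fixes f g :: "'x set \<Rightarrow> 'c::comm_ring_1"
  assumes "finite D"
    and h: "\<And>A. A \<subseteq> D \<Longrightarrow> f A = (\<Sum>B | B \<subseteq> A. (-1) ^ card B * g B)"
  shows "(\<Sum>A | A \<subseteq> D. (-1) ^ card A * f A) = g D"
proof -
  have "(\<Sum>A | A \<subseteq> D. (-1) ^ card A * f A)
      = (\<Sum>A\<in>Pow D. \<Sum>B\<in>Pow D. if B \<subseteq> A then (-1) ^ card A * ((-1) ^ card B * g B) else 0)"
  proof (rule sum.cong)
    show "{A. A \<subseteq> D} = Pow D" by auto
  next
    fix A assume A: "A \<in> Pow D"
    have "f A = (\<Sum>B\<in>Pow A. (-1) ^ card B * g B)" using h[of A] A by (simp add: Pow_def)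
    also have "\<dots> = (\<Sum>B\<in>{B\<in>Pow D. B \<subseteq> A}. (-1) ^ card B * g B)"
      by (rule sum.cong) (use A in auto)
    also have "\<dots> = (\<Sum>B\<in>Pow D. if B \<subseteq> A then (-1) ^ card B * g B else 0)"
      using assms by (subst sum.inter_filter) auto
    finally show "(-1) ^ card A * f A = (\<Sum>B\<in>Pow D. if B \<subseteq> A then (-1) ^ card A * ((-1) ^ card B * g B) else 0)"
      by (simp add: sum_distrib_left if_distrib cong: if_cong)
  qed
  also have "\<dots> = (\<Sum>B\<in>Pow D. \<Sum>A\<in>Pow D. if B \<subseteq> A then (-1) ^ card A * ((-1) ^ card B * g B) else 0)"
    by (rule sum.swap)
  also have "\<dots> = (\<Sum>B\<in>Pow D. ((-1) ^ card B * g B) * (\<Sum>A\<in>Pow D. if B \<subseteq> A then (-1) ^ card A else 0))"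
    by (simp add: sum_distrib_left if_distrib mult.commute cong: if_cong)
  also have "\<dots> = (\<Sum>B\<in>Pow D. if B = D then g D else 0)"
  proof (rule sum.cong)
    fix B assume "B \<in> Pow D"
    then show "((-1) ^ card B * g B) * (\<Sum>A\<in>Pow D. if B \<subseteq> A then (-1) ^ card A else 0) = (if B = D then g D else 0)"
      using assms by (simp add: alt_sum_super mult.commute mult.left_commute)
  qed simp
  also have "\<dots> = g D" using assms by simp
  finally show ?thesis .
qed



lemma sign_sum:
  fixes tau eta :: "'a \<Rightarrow> 'b::comm_ring_1"
  assumes "finite M" "S \<subseteq> M" "\<And>i. i \<in> S \<Longrightarrow> eta i = tau i - 1"
  shows "(\<Sum>A\<in>Pow S. (-1) ^ card A * (t * (\<Prod>i\<in>A. tau i) * (\<Prod>i\<in>M - A. eta i)))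
         = (-1) ^ card S * t * (\<Prod>i\<in>M - S. eta i)"
proof -
  have fS: "finite S" using assms finite_subset by blast
  have "(\<Sum>A\<in>Pow S. (-1) ^ card A * (t * (\<Prod>i\<in>A. tau i) * (\<Prod>i\<in>M - A. eta i)))
      = (\<Sum>A\<in>Pow S. t * (\<Prod>i\<in>M - S. eta i) * ((\<Prod>i\<in>A. - tau i) * (\<Prod>i\<in>S - A. eta i)))"
  proof (rule sum.cong)
    fix A assume A: "A \<in> Pow S"
    have "M - A = (M - S) \<union> (S - A)" using A assms by auto
    then have "(\<Prod>i\<in>M - A. eta i) = (\<Prod>i\<in>M - S. eta i) * (\<Prod>i\<in>S - A. eta i)"
      using assms(1) fS by (simp only:) (rule prod.union_disjoint, auto)
    moreover have "(\<Prod>i\<in>A. - tau i) = (-1) ^ card A * (\<Prod>i\<in>A. tau i)"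
    proof -
      have "(\<Prod>i\<in>A. - tau i) = (\<Prod>i\<in>A. (-1) * tau i)" by simp
      also have "\<dots> = (-1) ^ card A * (\<Prod>i\<in>A. tau i)" by (simp only: prod.distrib prod_constant)
      finally show ?thesis .
    qed
    ultimately show "(-1) ^ card A * (t * (\<Prod>i\<in>A. tau i) * (\<Prod>i\<in>M - A. eta i))
        = t * (\<Prod>i\<in>M - S. eta i) * ((\<Prod>i\<in>A. - tau i) * (\<Prod>i\<in>S - A. eta i))"
      by (simp add: algebra_simps)
  qed simp
  also have "\<dots> = t * (\<Prod>i\<in>M - S. eta i) * (\<Prod>i\<in>S. - tau i + eta i)"
    by (subst prod_add[OF fS]) (simp add: sum_distrib_left)
  also have "\<dots> = t * (\<Prod>i\<in>M - S. eta i) * (\<Prod>i\<in>S. -1)"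
    using assms by (simp cong: prod.cong)
  also have "\<dots> = (-1) ^ card S * t * (\<Prod>i\<in>M - S. eta i)" by (simp add: algebra_simps)
  finally show ?thesis .
qed



context
  fixes Om :: "'a set" and le :: "'a \<Rightarrow> 'a \<Rightarrow> bool" and Y :: "'a set"
  assumes po: "poset_on Om le" and YO: "Y \<subseteq> Om"
begin

lemma finY: "finite Y" using po YO finite_subset unfolding poset_on_def by blast

lemma ptrans: "x \<in> Y \<Longrightarrow> y \<in> Y \<Longrightarrow> z \<in> Y \<Longrightarrow> le x y \<Longrightarrow> le y z \<Longrightarrow> le x z"
  using po YO unfolding poset_on_def by blast

lemma prefl: "x \<in> Y \<Longrightarrow> le x x"
  using po YO unfolding poset_on_def by blast

lemma fin_down: "finite (downsets le Y)"
proof -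
  have "downsets le Y \<subseteq> Pow Y" unfolding downsets_def by auto
  then show ?thesis using finY finite_subset by blast
qed

lemma down_sub: "I \<in> downsets le Y \<Longrightarrow> I \<subseteq> Y" unfolding downsets_def by auto

lemma down_fin: "I \<in> downsets le Y \<Longrightarrow> finite I" using down_sub finY finite_subset by blast

lemma maxY_sub: "maxel le Y \<subseteq> Y" unfolding maxel_def by auto

lemma gen_sub: "gen le Y A \<subseteq> Y" unfolding gen_def by auto

lemma A_sub_gen: "A \<subseteq> Y \<Longrightarrow> A \<subseteq> gen le Y A" unfolding gen_def using prefl by blast

lemma gen_in_down: "I \<in> downsets le Y \<Longrightarrow> A \<subseteq> I \<Longrightarrow> gen le Y A \<subseteq> I"
  unfolding gen_def downsets_def by blast

lemma union_down:
  assumes "A \<subseteq> Y" "J \<in> downsets le (Y - gen le Y A)"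
  shows "J \<union> gen le Y A \<in> downsets le Y"
proof -
  have sub: "J \<union> gen le Y A \<subseteq> Y" using assms(2) gen_sub unfolding downsets_def by auto
  have cl: "\<forall>i\<in>J \<union> gen le Y A. \<forall>y\<in>Y. le y i \<longrightarrow> y \<in> J \<union> gen le Y A"
  proof (intro ballI impI)
    fix i y assume i: "i \<in> J \<union> gen le Y A" and y: "y \<in> Y" "le y i"
    show "y \<in> J \<union> gen le Y A"
    proof (cases "i \<in> gen le Y A")
      case True
      then obtain a where "a \<in> A" "le i a" "i \<in> Y" unfolding gen_def by auto
      then have "le y a" using ptrans y assms(1) by blast
      then have "y \<in> gen le Y A" using \<open>a \<in> A\<close> y unfolding gen_def by auto
      then show ?thesis by blast
    next
      case False
      then have "i \<in> J" using i by blast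
      then show ?thesis using assms(2) y unfolding downsets_def by blast
    qed
  qed
  show ?thesis using sub cl unfolding downsets_def by blast
qed

lemma diff_down:
  assumes "I \<in> downsets le Y"
  shows "I - gen le Y A \<in> downsets le (Y - gen le Y A)"
  using assms unfolding downsets_def by blast

lemma max_union:
  assumes A: "A \<subseteq> maxel le Y" and J: "J \<in> downsets le (Y - gen le Y A)"
  shows "maxel le (J \<union> gen le Y A) = A \<union> maxel le J"
proof -
  let ?G = "gen le Y A"
  have AY: "A \<subseteq> Y" using A maxY_sub by blast
  have JY: "J \<subseteq> Y - ?G" using J unfolding downsets_def by blast
  have AG: "A \<subseteq> ?G" using A_sub_gen[OF AY] .
  show ?thesis
  proof (rule set_eqI, rule iffI)
    fix x assume x: "x \<in> maxel le (J \<union> ?G)"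
    show "x \<in> A \<union> maxel le J"
    proof (cases "x \<in> ?G")
      case True
      then obtain a where a: "a \<in> A" "le x a" unfolding gen_def by auto
      then have "a \<in> J \<union> ?G" using AG by blast
      then have "a = x" using x a unfolding maxel_def by blast
      then show ?thesis using a by blast
    next
      case False
      then have "x \<in> J" using x unfolding maxel_def by blast
      then show ?thesis using x unfolding maxel_def by blast
    qed
  next
    fix x assume "x \<in> A \<union> maxel le J"
    then show "x \<in> maxel le (J \<union> ?G)"
    proof
      assume xA: "x \<in> A"
      have "x \<in> ?G" using xA AG by blast
      moreover have "z = x" if "z \<in> J \<union> ?G" "le x z" for z
      proof -
        have "z \<in> Y" using that JY gen_sub by blast
        then show ?thesis using xA A that unfolding maxel_def by blast
      qed
      ultimately show ?thesis unfolding maxel_def by blast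
    next
      assume xJ: "x \<in> maxel le J"
      then have xJ': "x \<in> J" unfolding maxel_def by blast
      moreover have "z = x" if z: "z \<in> J \<union> ?G" "le x z" for z
      proof (cases "z \<in> ?G")
        case True
        then obtain a where a: "a \<in> A" "le z a" "z \<in> Y" unfolding gen_def by auto
        have "x \<in> Y" using xJ' JY by blast
        then have "le x a" using ptrans a z AY by blast
        then have "x \<in> ?G" using a \<open>x \<in> Y\<close> unfolding gen_def by blast
        then show ?thesis using xJ' JY by blast
      next
        case False
        then show ?thesis using z xJ unfolding maxel_def by blast
      qed
      ultimately show ?thesis unfolding maxel_def by blast
    qed
  qed
qed

lemma keyK:
  fixes tau eta :: "'a \<Rightarrow> 'b::comm_ring_1"
  assumes A: "A \<subseteq> maxel le Y"
  shows "(\<Prod>i\<in>gen le Y A. [:0, tau i:]) * pi_poly le tau eta (Y - gen le Y A) {}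
   = (\<Sum>I\<in>{I\<in>downsets le Y. A \<subseteq> I}. monom ((\<Prod>i\<in>I - maxel le I. tau i) * (\<Prod>i\<in>A. tau i)
        * (\<Prod>i\<in>maxel le I - A. eta i)) (card I))"
proof -
  define G where "G = gen le Y A"
  have AY: "A \<subseteq> Y" using A maxY_sub by blast
  have AG: "A \<subseteq> G" unfolding G_def using A_sub_gen[OF AY] .
  have fG: "finite G" unfolding G_def using gen_sub finY finite_subset by blast
  have "(\<Prod>i\<in>G. [:0, tau i:]) * pi_poly le tau eta (Y - G) {}
     = (\<Sum>J\<in>downsets le (Y - G). monom ((\<Prod>i\<in>G. tau i) * ((\<Prod>i\<in>J - maxel le J. tau i)
         * (\<Prod>i\<in>maxel le J. eta i))) (card G + card J))"
    unfolding pi_poly_def by (simp add: prod_pmonom[OF fG] sum_distrib_left mult_monom phi_def)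
  also have "\<dots> = (\<Sum>I\<in>{I\<in>downsets le Y. A \<subseteq> I}. monom ((\<Prod>i\<in>I - maxel le I. tau i) * (\<Prod>i\<in>A. tau i)
        * (\<Prod>i\<in>maxel le I - A. eta i)) (card I))"
  proof (rule sum.reindex_bij_witness[where j = "\<lambda>J. J \<union> G" and i = "\<lambda>I. I - G"])
    fix J assume J: "J \<in> downsets le (Y - G)"
    have JY: "J \<subseteq> Y - G" using J unfolding downsets_def by blast
    have fJ: "finite J" using JY finY finite_subset by blast
    show "J \<union> G - G = J" using JY by blast
    show "J \<union> G \<in> {I\<in>downsets le Y. A \<subseteq> I}" using union_down[OF AY J[unfolded G_def]] AG
      unfolding G_def by blast
    have MI: "maxel le (J \<union> G) = A \<union> maxel le J" using max_union[OF A J[unfolded G_def]] unfolding G_def .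
    have MJ: "maxel le J \<subseteq> J" unfolding maxel_def by blast
    have c: "card (J \<union> G) = card G + card J" using fJ fG JY by (subst card_Un_disjoint) auto
    have e1: "J \<union> G - (A \<union> maxel le J) = (G - A) \<union> (J - maxel le J)" using JY MJ AG by blast
    have e2: "(\<Prod>i\<in>(G - A) \<union> (J - maxel le J). tau i) = (\<Prod>i\<in>G - A. tau i) * (\<Prod>i\<in>J - maxel le J. tau i)"
      using fG fJ JY by (intro prod.union_disjoint) auto
    have e3: "A \<union> maxel le J - A = maxel le J" using JY MJ AG by blast
    have e4: "(\<Prod>i\<in>G. tau i) = (\<Prod>i\<in>G - A. tau i) * (\<Prod>i\<in>A. tau i)"
      by (rule prod.subset_diff[OF AG fG])
    show "monom ((\<Prod>i\<in>J \<union> G - maxel le (J \<union> G). tau i) * (\<Prod>i\<in>A. tau i)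
        * (\<Prod>i\<in>maxel le (J \<union> G) - A. eta i)) (card (J \<union> G))
      = monom ((\<Prod>i\<in>G. tau i) * ((\<Prod>i\<in>J - maxel le J. tau i)
         * (\<Prod>i\<in>maxel le J. eta i))) (card G + card J)"
      unfolding MI e1 e2 e3 e4 c by (simp add: algebra_simps)
  next
    fix I assume I: "I \<in> {I\<in>downsets le Y. A \<subseteq> I}"
    show "I - G \<union> G = I" using gen_in_down I unfolding G_def by blast
    show "I - G \<in> downsets le (Y - G)" using diff_down I unfolding G_def by blast
  qed
  finally show ?thesis unfolding G_def .
qed

lemma D_in_max:
  assumes D: "D \<subseteq> maxel le Y" and I: "I \<in> downsets le Y"
  shows "D \<inter> I \<subseteq> maxel le I"
  using D down_sub[OF I] unfolding maxel_def by blast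

lemma part1:
  fixes tau eta :: "'a \<Rightarrow> 'b::comm_ring_1"
  assumes eta: "\<And>i. i \<in> Om \<Longrightarrow> eta i = tau i - 1" and D: "D \<subseteq> maxel le Y"
  shows "pi_poly le tau eta Y D = (\<Sum>A | A \<subseteq> D. (-1) ^ card A *
                (\<Prod>i\<in>gen le Y A. [:0, tau i:]) * pi_poly le tau eta (Y - gen le Y A) {})"
proof -
  define c where "c A I = (\<Prod>i\<in>I - maxel le I. tau i) * (\<Prod>i\<in>A. tau i)
        * (\<Prod>i\<in>maxel le I - A. eta i)" for A I
  have "D \<subseteq> Y" using D maxY_sub by blast
  then have fD: "finite D" using finY by (rule finite_subset)
  have "(\<Sum>A | A \<subseteq> D. (-1) ^ card A *
                (\<Prod>i\<in>gen le Y A. [:0, tau i:]) * pi_poly le tau eta (Y - gen le Y A) {})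
     = (\<Sum>A\<in>Pow D. \<Sum>I\<in>downsets le Y. if A \<subseteq> I then monom ((-1) ^ card A * c A I) (card I) else 0)"
  proof (rule sum.cong)
    show "{A. A \<subseteq> D} = Pow D" by auto
  next
    fix A assume A: "A \<in> Pow D"
    then have AM: "A \<subseteq> maxel le Y" using D by blast
    have "(-1) ^ card A * (\<Prod>i\<in>gen le Y A. [:0, tau i:]) * pi_poly le tau eta (Y - gen le Y A) {}
       = (-1) ^ card A * (\<Sum>I\<in>{I\<in>downsets le Y. A \<subseteq> I}. monom (c A I) (card I))"
      unfolding mult.assoc keyK[OF AM] c_def ..
    also have "\<dots> = (\<Sum>I\<in>{I\<in>downsets le Y. A \<subseteq> I}. monom ((-1) ^ card A * c A I) (card I))"
      by (simp add: sum_distrib_left neg_pow_monom)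
    also have "\<dots> = (\<Sum>I\<in>downsets le Y. if A \<subseteq> I then monom ((-1) ^ card A * c A I) (card I) else 0)"
      using fin_down by (rule sum.inter_filter)
    finally show "(-1) ^ card A * (\<Prod>i\<in>gen le Y A. [:0, tau i:]) * pi_poly le tau eta (Y - gen le Y A) {}
       = (\<Sum>I\<in>downsets le Y. if A \<subseteq> I then monom ((-1) ^ card A * c A I) (card I) else 0)" .
  qed
  also have "\<dots> = (\<Sum>I\<in>downsets le Y. \<Sum>A\<in>Pow D. if A \<subseteq> I then monom ((-1) ^ card A * c A I) (card I) else 0)"
    by (rule sum.swap)
  also have "\<dots> = (\<Sum>I\<in>downsets le Y. monom (phi le tau eta D I) (card I))"
  proof (rule sum.cong)
    fix I assume I: "I \<in> downsets le Y"
    have "(\<Sum>A\<in>Pow D. if A \<subseteq> I then monom ((-1) ^ card A * c A I) (card I) else 0)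
        = (\<Sum>A\<in>{A\<in>Pow D. A \<subseteq> I}. monom ((-1) ^ card A * c A I) (card I))"
      using fD by (intro sum.inter_filter[symmetric]) simp
    also have "\<dots> = (\<Sum>A\<in>Pow (D \<inter> I). monom ((-1) ^ card A * c A I) (card I))"
      by (rule sum.cong) blast+
    also have "\<dots> = monom (\<Sum>A\<in>Pow (D \<inter> I). (-1) ^ card A * c A I) (card I)"
      by (simp add: monom_sum)
    also have "(\<Sum>A\<in>Pow (D \<inter> I). (-1) ^ card A * c A I)
       = (-1) ^ card (D \<inter> I) * (\<Prod>i\<in>I - maxel le I. tau i) * (\<Prod>i\<in>maxel le I - D \<inter> I. eta i)"
      unfolding c_def
    proof (rule sign_sum)
      show "finite (maxel le I)" using down_fin[OF I] unfolding maxel_def by auto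
      show "D \<inter> I \<subseteq> maxel le I" using D_in_max[OF D I] .
      show "eta i = tau i - 1" if "i \<in> D \<inter> I" for i proof -
        have "i \<in> Om" using that D maxY_sub YO by blast
        then show ?thesis by (rule eta)
      qed
    qed
    also have "\<dots> = phi le tau eta D I"
    proof -
      have "maxel le I - D \<inter> I = maxel le I - D" unfolding maxel_def by blast
      moreover have "I \<inter> D \<subseteq> maxel le I" using D_in_max[OF D I] by blast
      ultimately show ?thesis unfolding phi_def by (simp add: Int_commute)
    qed
    finally show "(\<Sum>A\<in>Pow D. if A \<subseteq> I then monom ((-1) ^ card A * c A I) (card I) else 0)
       = monom (phi le tau eta D I) (card I)" .
  qed simp
  finally show ?thesis by (simp only: pi_poly_def[of le tau eta Y D])
qed

end


theorem theorem3p2: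
  fixes Om :: "'a set" and le :: "'a \<Rightarrow> 'a \<Rightarrow> bool"
    and tau eta :: "'a \<Rightarrow> 'b::comm_ring_1" and Y :: "'a set"
  assumes "poset_on Om le"
    and "\<And>i. i \<in> Om \<Longrightarrow> eta i = tau i - 1"
    and "Y \<subseteq> Om"
  shows "(\<forall>D. D \<subseteq> maxel le Y \<longrightarrow>
           pi_poly le tau eta Y D =
             (\<Sum>A | A \<subseteq> D. (-1) ^ card A *
                (\<Prod>i\<in>gen le Y A. [:0, tau i:]) * pi_poly le tau eta (Y - gen le Y A) {})) \<and>
         (\<forall>D. D \<subseteq> maxel le Y \<longrightarrow>
           (\<Prod>i\<in>gen le Y D. [:0, tau i:]) * pi_poly le tau eta (Y - gen le Y D) {} =
             (\<Sum>A | A \<subseteq> D. (-1) ^ card A * pi_poly le tau eta Y A))"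
proof -
  have p1: "pi_poly le tau eta Y D =
             (\<Sum>A | A \<subseteq> D. (-1) ^ card A *
                (\<Prod>i\<in>gen le Y A. [:0, tau i:]) * pi_poly le tau eta (Y - gen le Y A) {})"
    if "D \<subseteq> maxel le Y" for D
    using part1[OF assms(1) assms(3) assms(2) that] .
  have p2: "(\<Prod>i\<in>gen le Y D. [:0, tau i:]) * pi_poly le tau eta (Y - gen le Y D) {} =
             (\<Sum>A | A \<subseteq> D. (-1) ^ card A * pi_poly le tau eta Y A)"
    if D: "D \<subseteq> maxel le Y" for D
  proof -
    have "D \<subseteq> Y" using D maxY_sub[OF assms(1) assms(3)] by blast
    then have fD: "finite D" using finY[OF assms(1) assms(3)] by (rule finite_subset)
    have "(\<Sum>A | A \<subseteq> D. (-1) ^ card A * pi_poly le tau eta Y A)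
        = (\<Prod>i\<in>gen le Y D. [:0, tau i:]) * pi_poly le tau eta (Y - gen le Y D) {}"
    proof (rule subset_inversion[where f = "\<lambda>A. pi_poly le tau eta Y A"
        and g = "\<lambda>A. (\<Prod>i\<in>gen le Y A. [:0, tau i:]) * pi_poly le tau eta (Y - gen le Y A) {}", OF fD])
      fix A assume "A \<subseteq> D"
      then have "A \<subseteq> maxel le Y" using D by blast
      then show "pi_poly le tau eta Y A = (\<Sum>B | B \<subseteq> A. (-1) ^ card B *
          ((\<Prod>i\<in>gen le Y B. [:0, tau i:]) * pi_poly le tau eta (Y - gen le Y B) {}))"
        using p1[of A] by (simp only: mult.assoc)
    qed
    then show ?thesis by (rule sym)
  qed
  show ?thesis using p1 p2 by blast
qed

end
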